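(* Let $X$ be a nonempty set, $F:X\rightrightarrows Y$ with $F(x)\in\mathcal P^0_{\mp C}(Y)$ for all $x$, $\mp C$-closed and $\mp C$-bounded valued, let $e\in-\mathrm{int}(C)$, and assume that for all $x,y\in X$, $F(x)\preceq^sF(y)$ or $F(y)\preceq^sF(x)$. If $x_0\in X$ is an $s$-maximal (resp. $s$-minimal) solution of $(s\text{-}SOP)$, then $x_0$ is a strongly maximal (resp. strongly minimal) solution of the vector problem of maximizing (resp. minimizing) $v_e(F(x))$ over $x\in X$.
   Context: $Y$ is a real topological linear space and $C\subset Y$ is a convex, closed, pointed cone with nonempty interior. $\mathbb R^2$ is ordered by $\mathbb R^2_+$. $\mathcal P^0_{\mp C}(Y)$ is the family of nonempty $A\subset Y$ with $A+C\neq Y$ and $A-C\neq Y$. $C$-closed: $A+C$ closed; $C$-bounded: for every neighborhood $U$ of $0$ there is $t>0$ with $A\subset tU+C$; $\mp C$-closed/bounded: holds for $C$ and $-C$. $A\preceq^s B$ iff $B\subset A+C$ and $A\subset B-C$. $x_0$ is an $s$-maximal (minimal) solution of $(s\text{-}SOP)$ if for every $x\in X$, $F(x_0)\preceq^sF(x)$ implies $F(x)\preceq^sF(x_0)$ (resp. $F(x)\preceq^sF(x_0)$ implies $F(x_0)\preceq^sF(x)$). For $e\in-\mathrm{int}(C)$: $\phi_{e,A}(y)=\inf\{t\in\mathbb R: y\in te+A+C\}$; $G^\ell_e(A,B)=\sup_{b\in B}\phi_{e,A}(b)$; $G^u_e(B,A):=-G^\ell_e(-B,-A)$; $v_e(A)=\big(-G^\ell_e(\{0\},A),\,G^u_e(A,\{0\})\big)$.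 For $f:X\to\mathbb R^2$, $\bar x$ is a strongly maximal solution of $\max f$ if $f(x)\le_{\mathbb R^2_+}f(\bar x)$ for all $x\in X$, and a strongly minimal solution of $\min f$ if $f(\bar x)\le_{\mathbb R^2_+}f(x)$ for all $x\in X$. *)

theory Defs
  imports "HOL-Analysis.Analysis" "HOL-Library.Extended_Real"
begin

class real_topological_vector = real_vector + topological_ab_group_add +
  assumes tendsto_scaleR_Pair:
    "LIM x (nhds (a::real) \<times>\<^sub>F nhds b). fst x *\<^sub>R snd x :> nhds (a *\<^sub>R b)"

definition msum :: "'a::real_vector set \<Rightarrow> 'a set \<Rightarrow> 'a set" (infixl "\<oplus>" 65) where
  "A \<oplus> B = {a + b | a b. a \<in> A \<and> b \<in> B}"

definition mneg :: "'a::real_vector set \<Rightarrow> 'a set" where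
  "mneg A = uminus ` A"

definition proper_ordering_cone :: "'a::real_topological_vector set \<Rightarrow> bool" where
  "proper_ordering_cone C \<longleftrightarrow> cone C \<and> convex C \<and> closed C \<and> C \<inter> mneg C = {0}
     \<and> interior C \<noteq> {}"

definition P0 :: "'a::real_vector set \<Rightarrow> 'a set set" where
  "P0 C = {A. A \<noteq> {} \<and> A \<oplus> C \<noteq> UNIV \<and> A \<oplus> mneg C \<noteq> UNIV}"

definition C_closed :: "'a::real_topological_vector set \<Rightarrow> 'a set \<Rightarrow> bool" where
  "C_closed C A \<longleftrightarrow> closed (A \<oplus> C)"

definition C_bounded :: "'a::real_topological_vector set \<Rightarrow> 'a set \<Rightarrow> bool" where
  "C_bounded C A \<longleftrightarrow> (\<forall>U. (\<exists>V. open V \<and> 0 \<in> V \<and> V \<subseteq> U) \<longrightarrow>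
       (\<exists>t>0. A \<subseteq> ((\<lambda>u. t *\<^sub>R u) ` U) \<oplus> C))"

definition mp_C_closed :: "'a::real_topological_vector set \<Rightarrow> 'a set \<Rightarrow> bool" where
  "mp_C_closed C A \<longleftrightarrow> C_closed C A \<and> C_closed (mneg C) A"

definition mp_C_bounded :: "'a::real_topological_vector set \<Rightarrow> 'a set \<Rightarrow> bool" where
  "mp_C_bounded C A \<longleftrightarrow> C_bounded C A \<and> C_bounded (mneg C) A"

definition set_less_s :: "'a::real_vector set \<Rightarrow> 'a set \<Rightarrow> 'a set \<Rightarrow> bool" where
  "set_less_s C A B \<longleftrightarrow> B \<subseteq> A \<oplus> C \<and> A \<subseteq> B \<oplus> mneg C"

definition s_maximal :: "'a::real_vector set \<Rightarrow> 'x set \<Rightarrow> ('x \<Rightarrow> 'a set) \<Rightarrow> 'x \<Rightarrow> bool" where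
  "s_maximal C X F x0 \<longleftrightarrow> x0 \<in> X \<and>
     (\<forall>x\<in>X. set_less_s C (F x0) (F x) \<longrightarrow> set_less_s C (F x) (F x0))"

definition s_minimal :: "'a::real_vector set \<Rightarrow> 'x set \<Rightarrow> ('x \<Rightarrow> 'a set) \<Rightarrow> 'x \<Rightarrow> bool" where
  "s_minimal C X F x0 \<longleftrightarrow> x0 \<in> X \<and>
     (\<forall>x\<in>X. set_less_s C (F x) (F x0) \<longrightarrow> set_less_s C (F x0) (F x))"

text \<open>Gerstewitz-type scalarization, valued in the extended reals (inf of empty set = +\<infinity>).\<close>
definition phi :: "'a::real_vector set \<Rightarrow> 'a \<Rightarrow> 'a set \<Rightarrow> 'a \<Rightarrow> ereal" where
  "phi C e A y = Inf {ereal t | t. y \<in> ({t *\<^sub>R e} \<oplus> A) \<oplus> C}"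

definition G_l :: "'a::real_vector set \<Rightarrow> 'a \<Rightarrow> 'a set \<Rightarrow> 'a set \<Rightarrow> ereal" where
  "G_l C e A B = (SUP b\<in>B. phi C e A b)"

definition G_u :: "'a::real_vector set \<Rightarrow> 'a \<Rightarrow> 'a set \<Rightarrow> 'a set \<Rightarrow> ereal" where
  "G_u C e B A = - G_l C e (mneg B) (mneg A)"

definition v_e :: "'a::real_vector set \<Rightarrow> 'a \<Rightarrow> 'a set \<Rightarrow> ereal \<times> ereal" where
  "v_e C e A = (- G_l C e {0} A, G_u C e A {0})"

definition le_R2 :: "ereal \<times> ereal \<Rightarrow> ereal \<times> ereal \<Rightarrow> bool" where
  "le_R2 p q \<longleftrightarrow> fst p \<le> fst q \<and> snd p \<le> snd q"

definition strongly_maximal :: "'x set \<Rightarrow> ('x \<Rightarrow> ereal \<times> ereal) \<Rightarrow> 'x \<Rightarrow> bool" where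
  "strongly_maximal X f xb \<longleftrightarrow> xb \<in> X \<and> (\<forall>x\<in>X. le_R2 (f x) (f xb))"

definition strongly_minimal :: "'x set \<Rightarrow> ('x \<Rightarrow> ereal \<times> ereal) \<Rightarrow> 'x \<Rightarrow> bool" where
  "strongly_minimal X f xb \<longleftrightarrow> xb \<in> X \<and> (\<forall>x\<in>X. le_R2 (f xb) (f x))"

end

theory Submission
  imports Defs
begin

lemma C_add:
  assumes "cone C" "convex C" "a \<in> C" "b \<in> C"
  shows "a + b \<in> C"
proof -
  have "(1/2::real) *\<^sub>R a + (1/2::real) *\<^sub>R b \<in> C"
    using assms(2-4) by (intro convexD) auto
  then have "(2::real) *\<^sub>R ((1/2::real) *\<^sub>R a + (1/2::real) *\<^sub>R b) \<in> C"
    using assms(1) unfolding cone_def by auto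
  then show ?thesis by (simp add: scaleR_add_right)
qed

lemma Gl_mono:
  assumes "cone C" "convex C" "B \<subseteq> A \<oplus> C"
  shows "G_l C e {0} B \<le> G_l C e {0} A"
  unfolding G_l_def
proof (rule SUP_least)
  fix b assume "b \<in> B"
  then obtain a c where ac: "a \<in> A" "c \<in> C" "b = a + c"
    using assms(3) unfolding msum_def by auto
  have "phi C e {0} b \<le> phi C e {0} a"
    unfolding phi_def
  proof (rule Inf_superset_mono, safe)
    fix t assume "a \<in> {t *\<^sub>R e} \<oplus> {0} \<oplus> C"
    then obtain c' where "c' \<in> C" "a = t *\<^sub>R e + c'" unfolding msum_def by auto
    then have "b = t *\<^sub>R e + (c' + c)" "c' + c \<in> C"
      using ac C_add[OF assms(1,2)] by (auto simp: algebra_simps)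
    then have "b \<in> {t *\<^sub>R e} \<oplus> {0} \<oplus> C" unfolding msum_def by force
    then show "\<exists>t'. ereal t = ereal t' \<and> b \<in> {t' *\<^sub>R e} \<oplus> {0} \<oplus> C" by blast
  qed
  also have "\<dots> \<le> (SUP a\<in>A. phi C e {0} a)" using ac(1) by (rule SUP_upper)
  finally show "phi C e {0} b \<le> (SUP a\<in>A. phi C e {0} a)" .
qed

lemma Gu_mono:
  assumes "cone C" "convex C" "A \<subseteq> B \<oplus> mneg C"
  shows "G_u C e A {0} \<le> G_u C e B {0}"
proof -
  have m0: "mneg {0::'a} = {0}" unfolding mneg_def by simp
  have "phi C e (mneg B) 0 \<le> phi C e (mneg A) 0"
    unfolding phi_def
  proof (rule Inf_superset_mono, safe)
    fix t assume "0 \<in> {t *\<^sub>R e} \<oplus> mneg A \<oplus> C"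
    then obtain a c where ac: "a \<in> A" "c \<in> C" "0 = t *\<^sub>R e + - a + c"
      unfolding msum_def mneg_def by auto
    then obtain b c' where bc: "b \<in> B" "c' \<in> C" "a = b + - c'"
      using assms(3) unfolding msum_def mneg_def by auto
    have "0 = t *\<^sub>R e + - b + (c' + c)" "c' + c \<in> C"
      using ac bc C_add[OF assms(1,2)] by (auto simp: algebra_simps)
    then have "0 \<in> {t *\<^sub>R e} \<oplus> mneg B \<oplus> C" using bc(1)
      unfolding msum_def mneg_def by force
    then show "\<exists>t'. ereal t = ereal t' \<and> 0 \<in> {t' *\<^sub>R e} \<oplus> mneg B \<oplus> C" by blast
  qed
  then show ?thesis unfolding G_u_def G_l_def m0 by simp
qed

lemma v_mono:
  assumes "cone C" "convex C" "set_less_s C A B"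
  shows "le_R2 (v_e C e A) (v_e C e B)"
  using Gl_mono[OF assms(1,2), of B A e] Gu_mono[OF assms(1,2), of A B e] assms(3)
  unfolding le_R2_def v_e_def set_less_s_def by simp

theorem corollary1:
  fixes C :: "'y::real_topological_vector set"
    and X :: "'x set" and F :: "'x \<Rightarrow> 'y set" and e :: 'y and x0 :: 'x
  assumes "proper_ordering_cone C"
    and "X \<noteq> {}"
    and "\<forall>x\<in>X. F x \<in> P0 C"
    and "\<forall>x\<in>X. mp_C_closed C (F x)"
    and "\<forall>x\<in>X. mp_C_bounded C (F x)"
    and "e \<in> mneg (interior C)"
    and "\<forall>x\<in>X. \<forall>y\<in>X. set_less_s C (F x) (F y) \<or> set_less_s C (F y) (F x)"
  shows "(s_maximal C X F x0 \<longrightarrow> strongly_maximal X (\<lambda>x. v_e C e (F x)) x0)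
       \<and> (s_minimal C X F x0 \<longrightarrow> strongly_minimal X (\<lambda>x. v_e C e (F x)) x0)"
proof -
  have cc: "cone C" "convex C" using assms(1) unfolding proper_ordering_cone_def by auto
  note vm = v_mono[OF cc]
  show ?thesis
    using assms(7) vm unfolding s_maximal_def s_minimal_def strongly_maximal_def strongly_minimal_def
    by meson
qed

end
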